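(* Let $n\ge 2$ be an integer such that $C_n=n2^n+1$ is composite and $\phi(C_n)\mid C_n-1$. Let $k$ be the number of distinct prime factors of $C_n$. Then $k<1+2.4\log n$, where $\log$ is the natural logarithm.
   Context: $\phi$ denotes Euler's totient function, and $C_n=n2^n+1$. *)

theory Defs
  imports "HOL-Number_Theory.Number_Theory"
begin

definition C :: "nat \<Rightarrow> nat" where
  "C n = n * 2 ^ n + 1"

end

theory Submission
  imports Defs "HOL-Analysis.Harmonic_Numbers"
begin

lemma sum_pow2_ge:
  fixes J :: "nat set"
  assumes "finite J"
  shows "2 ^ card J \<le> (\<Sum>j\<in>J. (2::nat) ^ j) + 1"
  using assms
proof (induction J rule: finite_linorder_max_induct)
  case empty
  then show ?case by simp
next
  case (insert b A)
  have bA: "b \<notin> A" using insert by auto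
  have "A \<subseteq> {..<b}" using insert by auto
  hence "card A \<le> b" using card_mono[of "{..<b}" A] by simp
  hence p: "(2::nat) ^ card A \<le> 2 ^ b" by (simp add: power_increasing)
  have c: "card (insert b A) = Suc (card A)" using insert bA by simp
  have s: "(\<Sum>j\<in>insert b A. (2::nat) ^ j) = 2 ^ b + (\<Sum>j\<in>A. 2 ^ j)"
    using insert bA by simp
  show ?case unfolding c s using insert.IH p by (simp only: power_Suc)
qed

lemma fermat_pow2:
  fixes a :: nat
  assumes p: "prime (2 ^ a + 1 :: nat)" and a: "a > 0"
  shows "\<exists>j. a = 2 ^ j"
proof -
  obtain k m where m: "\<not> 2 dvd m" and am: "a = m * 2 ^ k"
    using prime_power_canonical[OF two_is_prime_nat a] by blast
  show ?thesis
  proof (cases "m = 1")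
    case True
    then show ?thesis using am by auto
  next
    case False
    with m have m3: "m \<ge> 3" by presburger
    define x :: nat where "x = 2 ^ (2 ^ k)"
    have "(1::nat) \<le> 2 ^ k" by simp
    hence "(2::nat) ^ 1 \<le> 2 ^ (2 ^ k)" by (rule power_increasing) simp
    hence x2: "x \<ge> 2" unfolding x_def by simp
    have pa: "(2::nat) ^ a = x ^ m" unfolding x_def am by (simp only: mult.commute[of m "2 ^ k"] power_mult)
    have "[int x = -1] (mod (int x + 1))"
      by (simp add: cong_iff_dvd_diff)
    hence "[int x ^ m = (-1) ^ m] (mod (int x + 1))" by (rule cong_pow)
    hence "[int x ^ m = -1] (mod (int x + 1))" using m by simp
    hence "[int x ^ m + 1 = -1 + 1] (mod (int x + 1))" by (rule cong_add) (rule cong_refl)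
    hence "(int x + 1) dvd (int x ^ m + 1)" by (simp add: cong_0_iff)
    hence "int (x + 1) dvd int (x ^ m + 1)" by (simp only: of_nat_add of_nat_power of_nat_1)
    hence d: "(x + 1) dvd (2 ^ a + 1)" unfolding pa using int_dvd_int_iff by blast
    have "x ^ 1 < x ^ m" using x2 m3 by (intro power_strict_increasing) auto
    hence "x + 1 < 2 ^ a + 1" unfolding pa by simp
    moreover have "x + 1 > 1" using x2 by simp
    moreover have "x + 1 = 1 \<or> x + 1 = 2 ^ a + 1" using p d unfolding prime_nat_iff by blast
    ultimately show ?thesis by linarith
  qed
qed

lemma real_bound:
  fixes n f t :: nat
  assumes n: "n \<ge> 2" and f: "2 ^ f \<le> 2 * n" and t: "3 ^ t \<le> n"
  shows "real (f + t) < 1 + 2.4 * ln (real n)"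
proof -
  have l2: "ln (2::real) \<ge> 0.69"
    using ln_approx_bounds[of 2 2] by (simp add: eval_nat_numeral)
  have l3: "ln (3::real) \<ge> 1.09"
    using ln_approx_bounds[of 3 3] by (simp add: eval_nat_numeral)
  define L where "L = ln (real n)"
  have Lpos: "L > 0" using n unfolding L_def by simp
  have "ln (real (2 ^ f)) \<le> ln (real (2 * n))"
    using f n by (subst ln_le_cancel_iff) (simp_all only: of_nat_le_iff, auto)
  hence "real f * ln 2 \<le> ln 2 + L" unfolding L_def using n
    by (simp add: ln_realpow ln_mult)
  hence F: "real f \<le> 1 + L / ln 2" using l2 by (simp add: field_simps)
  have "ln (real (3 ^ t)) \<le> ln (real n)"
    using t n by (subst ln_le_cancel_iff) (simp_all only: of_nat_le_iff, auto)
  hence "real t * ln 3 \<le> L" unfolding L_def by (simp add: ln_realpow)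
  hence T: "real t \<le> L / ln 3" using l3 by (simp add: field_simps)
  have "L / ln 2 \<le> L / 0.69" using l2 Lpos by (intro divide_left_mono) auto
  moreover have "L / ln 3 \<le> L / 1.09" using l3 Lpos by (intro divide_left_mono) auto
  moreover have "L / 0.69 + L / 1.09 < 2.4 * L" using Lpos by simp
  ultimately show ?thesis using F T unfolding L_def by simp
qed

theorem mainTheorem3:
  fixes n :: nat
  assumes "n \<ge> 2"
    and "\<not> prime (C n)"
    and "totient (C n) dvd C n - 1"
  shows "real (card (prime_factors (C n))) < 1 + 2.4 * ln (real n)"
proof -
  define N where "N = C n"
  define P where "P = prime_factors N"
  have n2: "n \<ge> 2" using assms by simp
  have N1: "N - 1 = n * 2 ^ n" unfolding N_def C_def by simp
  have Npos: "N > 0" unfolding N_def C_def by simp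
  have Nodd: "odd N" unfolding N_def C_def using n2 by simp
  have finP: "finite P" unfolding P_def by simp
  have Pprime: "prime p" if "p \<in> P" for p using that unfolding P_def by auto
  have Pdvd: "p dvd N" if "p \<in> P" for p using that unfolding P_def by auto
  have Podd: "odd p" if "p \<in> P" for p using Pdvd[OF that] Nodd by (metis dvd_trans)
  have P3: "p \<ge> 3" if "p \<in> P" for p
    using Podd[OF that] prime_ge_2_nat[OF Pprime[OF that]] by presburger
  define D where "D = (\<Prod>p\<in>P. p - 1)"
  have "D dvd totient N"
    unfolding D_def P_def totient_formula1[OF Npos] by (intro prod_dvd_prod) simp
  hence Ddvd: "D dvd n * 2 ^ n" using assms(3) N1 unfolding N_def by (metis dvd_trans)
  define g :: "nat \<Rightarrow> nat" where "g j = 2 ^ (2 ^ j) + 1" for j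
  have ginj: "inj g" unfolding g_def by (intro injI) simp
  define J where "J = g -` P"
  have finJ: "finite J" unfolding J_def using finP ginj by (rule finite_vimageI)
  define F where "F = g ` J"
  define T where "T = P - F"
  have FP: "F \<subseteq> P" unfolding F_def J_def by auto
  have finT: "finite T" unfolding T_def using finP by simp
  have cardF: "card F = card J" unfolding F_def using ginj by (simp add: card_image inj_on_subset)
  have cardP: "card P = card F + card T"
    unfolding T_def using card_Diff_subset[OF finite_subset[OF FP finP] FP] card_mono[OF finP FP] by simp
  define a where "a p = multiplicity (2::nat) (p - 1)" for p
  define m where "m p = (p - 1) div 2 ^ a p" for p
  have am: "p - 1 = 2 ^ a p * m p" for p
    unfolding a_def m_def by (simp add: multiplicity_dvd)
  have modd: "odd (m p)" if "p \<in> P" for p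
  proof -
    have "p - 1 \<noteq> 0" using P3[OF that] by simp
    then show ?thesis unfolding m_def a_def using multiplicity_decompose[of "p - 1" 2] by simp
  qed
  have m3: "m p \<ge> 3" if "p \<in> T" for p
  proof (rule ccontr)
    assume "\<not> m p \<ge> 3"
    moreover have pP: "p \<in> P" using that unfolding T_def by simp
    ultimately have "m p = 1" using modd[OF pP] by presburger
    hence pe: "p = 2 ^ a p + 1" using am[of p] P3[OF pP] by simp
    have "a p > 0" using pe P3[OF pP] by (cases "a p") auto
    moreover have "prime (2 ^ a p + 1 :: nat)" using pe Pprime[OF pP] by simp
    ultimately have "\<exists>j. a p = 2 ^ j" using fermat_pow2[of "a p"] by simp
    then obtain j where "a p = 2 ^ j" by blast
    hence "p = g j" using pe unfolding g_def by simp
    hence "p \<in> F" unfolding F_def J_def using pP by auto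
    thus False using that unfolding T_def by simp
  qed
  have DFT: "D = (\<Prod>p\<in>F. p - 1) * (\<Prod>p\<in>T. p - 1)"
    unfolding D_def T_def by (simp add: prod.subset_diff[OF FP finP] mult.commute)
  have DF: "(\<Prod>p\<in>F. p - 1) = 2 ^ (\<Sum>j\<in>J. 2 ^ j)"
  proof -
    have "(\<Prod>p\<in>F. p - 1) = (\<Prod>j\<in>J. g j - 1)"
      unfolding F_def using ginj by (simp add: prod.reindex inj_on_subset)
    also have "\<dots> = (\<Prod>j\<in>J. 2 ^ (2 ^ j))" unfolding g_def by simp
    also have "\<dots> = 2 ^ (\<Sum>j\<in>J. 2 ^ j)" by (simp add: power_sum)
    finally show ?thesis .
  qed
  have DT: "(\<Prod>p\<in>T. p - 1) = (\<Prod>p\<in>T. 2 ^ a p) * (\<Prod>p\<in>T. m p)"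
    by (simp only: am prod.distrib)
  have "2 ^ (\<Sum>j\<in>J. 2 ^ j) dvd n * 2 ^ n"
    using Ddvd unfolding DFT DF by (rule dvd_mult_left)
  hence "(2::nat) ^ (\<Sum>j\<in>J. 2 ^ j) \<le> n * 2 ^ n" using n2 by (intro dvd_imp_le) auto
  also have "n * 2 ^ n < 2 ^ n * 2 ^ n" using n2 by simp
  also have "\<dots> = 2 ^ (2 * n)" by (simp add: power_add[symmetric] mult_2)
  finally have "(\<Sum>j\<in>J. 2 ^ j) < 2 * n" by simp
  hence f2: "2 ^ card F \<le> 2 * n" using sum_pow2_ge[OF finJ] cardF by simp
  have Mdvd: "(\<Prod>p\<in>T. m p) dvd n * 2 ^ n"
    using Ddvd unfolding DFT DT mult.assoc[symmetric] by (rule dvd_mult_right)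
  have "odd (\<Prod>p\<in>T. m p)"
    using modd prime_dvd_prod_iff[OF finT two_is_prime_nat, of m] unfolding T_def by auto
  hence "coprime (\<Prod>p\<in>T. m p) (2 ^ n)" by simp
  hence "(\<Prod>p\<in>T. m p) dvd n" using Mdvd by (simp add: coprime_dvd_mult_left_iff)
  hence "(\<Prod>p\<in>T. m p) \<le> n" using n2 by (intro dvd_imp_le) auto
  moreover have "(3::nat) ^ card T \<le> (\<Prod>p\<in>T. m p)"
    using prod_mono[of T "\<lambda>_. (3::nat)" m] m3 by simp
  ultimately have t3: "3 ^ card T \<le> n" by simp
  have "real (card F + card T) < 1 + 2.4 * ln (real n)"
    by (rule real_bound[OF n2 f2 t3])
  thus ?thesis unfolding N_def[symmetric] P_def[symmetric] cardP .
qed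

end
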